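(* Consider the mixed support-set model described in the context, and let $\mathsf p_1,\dots,\mathsf p_h,\mathsf q_1,\dots,\mathsf q_m$ be $h+m$ distinct sensors. Writing $\phi=\frac{T}{N-T}\epsilon$, $$\Pr\Big(i\in\bigcap_{l=1}^{h}\hat{\mathcal T}_{\mathsf p_l},\ i\in\bigcap_{l=1}^{m}\hat{\mathcal T}_{\mathsf q_l}^{\complement}\Big)=(1-\epsilon)^h\epsilon^m\frac{J}{N}+h(1-\epsilon)\phi^{h-1}(1-\phi)^m\frac{I}{N}+m\,\epsilon\,\phi^{h}(1-\phi)^{m-1}\frac{I}{N}+\phi^{h}(1-\phi)^{m}\frac{N-J-(m+h)I}{N}.$$
   Context: Let $N>T\ge1$ be integers and $\Omega=\{1,\dots,N\}$; complements are taken in $\Omega$. A finite set $\mathcal L$ of sensors is given. Mixed support-set model: there are a fixed set $\mathcal J\subseteq\Omega$ with $|\mathcal J|=J$ and, for each sensor $\mathsf p\in\mathcal L$, a fixed set $\mathcal I_{\mathsf p}\subseteq\Omega$ with $|\mathcal I_{\mathsf p}|=I$, such that $\mathcal I_{\mathsf p}\cap\mathcal J=\emptyset$ for all $\mathsf p$, $\mathcal I_{\mathsf p}\cap\mathcal I_{\mathsf q}=\emptyset$ for $\mathsf p\ne\mathsf q$, and the true support set of sensor $\mathsf p$ is $\mathcal T_{\mathsf p}=\mathcal I_{\mathsf p}\cup\mathcal J$; thus $T=I+J$. Each sensor has a random estimated support set $\hat{\mathcal T}_{\mathsf p}\subseteq\Omega$. A random index $i$ is uniformly distributed on $\Omega$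 and independent of all estimates. System model: there is $\epsilon$ with $0\le\epsilon\le (N-T)/N$, common to all sensors, such that for every sensor $\mathsf p$ and every $j\in\Omega$, $\Pr(j\in\hat{\mathcal T}_{\mathsf p})=1-\epsilon$ if $j\in\mathcal T_{\mathsf p}$ and $\Pr(j\in\hat{\mathcal T}_{\mathsf p})=\frac{T}{N-T}\epsilon$ if $j\notin\mathcal T_{\mathsf p}$ (detection probability $1-\epsilon$, miss probability $\epsilon$, false-alarm probability $\frac{T}{N-T}\epsilon$). For each fixed $j\in\Omega$, the events $\{j\in\hat{\mathcal T}_{\mathsf p}\}$, $\mathsf p\in\mathcal L$, are mutually independent. Convention: $0^0=1$ and a term with coefficient $0$ is $0$. *)

theory Defs
  imports "HOL-Probability.Probability"
begin

end

theory Submission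
  imports Defs
begin

lemma sig_int: "G \<subseteq> Pow sp \<Longrightarrow> a \<in> sigma_sets sp G \<Longrightarrow> b \<in> sigma_sets sp G \<Longrightarrow> a \<inter> b \<in> sigma_sets sp G"
  proof -
  assume h: "G \<subseteq> Pow sp" "a \<in> sigma_sets sp G" "b \<in> sigma_sets sp G"
  have "a \<subseteq> sp" "b \<subseteq> sp" using h sigma_sets_into_sp by blast+
  then have "a \<inter> b = sp - ((sp - a) \<union> (sp - b))" by blast
  then show ?thesis using h by (simp add: sigma_sets.Compl sigma_sets_Un)
qed

definition XX :: "'w set \<Rightarrow> ('a \<Rightarrow> 'w set) \<Rightarrow> 'a set \<Rightarrow> 'a set \<Rightarrow> 'w set" where
  "XX S A P Q = {w \<in> S. (\<forall>p\<in>P. w \<in> A p) \<and> (\<forall>q\<in>Q. w \<notin> A q)}"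

lemma XX_sig:
  assumes "finite P" "finite Q" "\<And>p. p \<in> P \<union> Q \<Longrightarrow> A p \<in> G" "G \<subseteq> Pow sp"
  shows "XX sp A P Q \<in> sigma_sets sp G"
proof -
  have 1: "XX sp A P {} \<in> sigma_sets sp G" using assms(1,3)
  proof (induction P rule: finite_induct)
    case empty then show ?case by (simp add: XX_def sigma_sets_top)
  next
    case (insert p P)
    have "XX sp A (insert p P) {} = A p \<inter> XX sp A P {}" using insert assms(4) by (auto simp: XX_def)
    then show ?case using insert sig_int[OF assms(4)] by (simp add: sigma_sets.Basic)
  qed
  have 2: "XX sp A {} Q \<in> sigma_sets sp G" using assms(2,3)
  proof (induction Q rule: finite_induct)
    case empty then show ?case by (simp add: XX_def sigma_sets_top)
  next
    case (insert p P)
    have "XX sp A {} (insert p P) = (sp - A p) \<inter> XX sp A {} P" using insert assms(4) by (auto simp: XX_def)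
    then show ?case using insert sig_int[OF assms(4)] by (simp add: sigma_sets.Basic sigma_sets.Compl)
  qed
  have "XX sp A P Q = XX sp A P {} \<inter> XX sp A {} Q" by (auto simp: XX_def)
  then show ?thesis using 1 2 sig_int[OF assms(4)] by simp
qed

lemma (in prob_space) XX_prob:
  assumes ind: "indep_events A L" and "finite Q" "finite P" "P \<subseteq> L" "Q \<subseteq> L" "P \<inter> Q = {}"
  shows "prob (XX (space M) A P Q) = (\<Prod>p\<in>P. prob (A p)) * (\<Prod>q\<in>Q. 1 - prob (A q))"
  using assms(2-)
proof (induction Q arbitrary: P rule: finite_induct)
  case empty
  have ev: "A ` L \<subseteq> events" using ind by (simp add: indep_events_def)
  show ?case
  proof (cases "P = {}")
    case True then show ?thesis by (simp add: XX_def prob_space)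
  next
    case False
    have "XX (space M) A P {} = (\<Inter>j\<in>P. A j)" using False ev empty.prems sets.sets_into_space
      by (auto simp: XX_def) blast
    then show ?thesis using ind empty.prems False by (simp add: indep_events_def)
  qed
next
  case (insert q Q)
  have ev: "A ` L \<subseteq> events" using ind by (simp add: indep_events_def)
  have XXm: "\<And>P Q. finite P \<Longrightarrow> finite Q \<Longrightarrow> P \<subseteq> L \<Longrightarrow> Q \<subseteq> L \<Longrightarrow> XX (space M) A P Q \<in> events"
    unfolding XX_def using ev
    by (intro sets.sets_Collect_conj sets.sets_Collect_finite_All sets.sets_Collect_neg) 
       (auto intro: sets.sets_Collect_finite_All)
  have eq: "XX (space M) A P (insert q Q) = XX (space M) A P Q - A q" by (auto simp: XX_def)
  have eq2: "XX (space M) A P Q \<inter> A q = XX (space M) A (insert q P) Q" by (auto simp: XX_def)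
  have "prob (XX (space M) A P (insert q Q)) = prob (XX (space M) A P Q) - prob (XX (space M) A (insert q P) Q)"
    unfolding eq eq2[symmetric] using insert.prems insert.hyps ev
    by (intro finite_measure_Diff') (auto intro!: XXm)
  also have "\<dots> = (\<Prod>p\<in>P. prob (A p)) * (\<Prod>q\<in>Q. 1 - prob (A q)) - prob (A q) * (\<Prod>p\<in>P. prob (A p)) * (\<Prod>q\<in>Q. 1 - prob (A q))"
    using insert.IH[of P] insert.IH[of "insert q P"] insert.prems insert.hyps
    by (auto simp: prod.insert_remove)
  also have "\<dots> = (\<Prod>p\<in>P. prob (A p)) * (\<Prod>q\<in>insert q Q. 1 - prob (A q))"
    using insert.hyps by (simp add: algebra_simps)
  finally show ?case .
qed
theorem lemma3:
  fixes M :: "'w measure"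
    and L :: "'a set"
    and N T I J :: nat
    and \<epsilon> :: real
    and Jset :: "nat set"
    and Iset :: "'a \<Rightarrow> nat set"
    and That :: "'a \<Rightarrow> 'w \<Rightarrow> nat set"
    and idx :: "'w \<Rightarrow> nat"
    and ps qs :: "'a list"
  assumes M: "prob_space M"
    and L_fin: "finite L"
    and NT: "N > T" "T \<ge> 1"
    and eps: "0 \<le> \<epsilon>" "\<epsilon> \<le> (real N - real T) / real N"
    and J_sub: "Jset \<subseteq> {1..N}" and J_card: "card Jset = J"
    and I_sub: "\<And>p. p \<in> L \<Longrightarrow> Iset p \<subseteq> {1..N}"
    and I_card: "\<And>p. p \<in> L \<Longrightarrow> card (Iset p) = I"
    and IJ_disj: "\<And>p. p \<in> L \<Longrightarrow> Iset p \<inter> Jset = {}"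
    and II_disj: "\<And>p q. p \<in> L \<Longrightarrow> q \<in> L \<Longrightarrow> p \<noteq> q \<Longrightarrow> Iset p \<inter> Iset q = {}"
    and T_eq: "T = I + J"
    and est_sub: "\<And>p w. p \<in> L \<Longrightarrow> w \<in> space M \<Longrightarrow> That p w \<subseteq> {1..N}"
    and est_meas: "\<And>p j. p \<in> L \<Longrightarrow> j \<in> {1..N} \<Longrightarrow>
        {w \<in> space M. j \<in> That p w} \<in> sets M"
    and detect: "\<And>p j. p \<in> L \<Longrightarrow> j \<in> Iset p \<union> Jset \<Longrightarrow>
        measure M {w \<in> space M. j \<in> That p w} = 1 - \<epsilon>"
    and false_alarm: "\<And>p j. p \<in> L \<Longrightarrow> j \<in> {1..N} - (Iset p \<union> Jset) \<Longrightarrow>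
        measure M {w \<in> space M. j \<in> That p w} = real T / (real N - real T) * \<epsilon>"
    and indep_sensors: "\<And>j. j \<in> {1..N} \<Longrightarrow>
        prob_space.indep_events M (\<lambda>p. {w \<in> space M. j \<in> That p w}) L"
    and idx_uniform: "\<And>j. j \<in> {1..N} \<Longrightarrow>
        measure M {w \<in> space M. idx w = j} = 1 / real N"
    and idx_indep: "\<And>j E. j \<in> {1..N} \<Longrightarrow>
        E \<in> sigma_sets (space M) {{w \<in> space M. k \<in> That p w} | p k. p \<in> L \<and> k \<in> {1..N}} \<Longrightarrow>
        measure M ({w \<in> space M. idx w = j} \<inter> E) = measure M {w \<in> space M. idx w = j} * measure M E"
    and idx_meas: "idx \<in> measurable M (count_space UNIV)"
    and dist: "distinct (ps @ qs)"
    and ps_L: "set ps \<subseteq> L" and qs_L: "set qs \<subseteq> L"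
  shows "measure M {w \<in> space M. (\<forall>p\<in>set ps. idx w \<in> That p w) \<and>
                                    (\<forall>q\<in>set qs. idx w \<notin> That q w)}
    = (let h = length ps; m = length qs; \<phi> = real T / (real N - real T) * \<epsilon> in
         (1 - \<epsilon>) ^ h * \<epsilon> ^ m * (real J / real N)
       + real h * (1 - \<epsilon>) * \<phi> ^ (h - 1) * (1 - \<phi>) ^ m * (real I / real N)
       + real m * \<epsilon> * \<phi> ^ h * (1 - \<phi>) ^ (m - 1) * (real I / real N)
       + \<phi> ^ h * (1 - \<phi>) ^ m * ((real N - real J - (real m + real h) * real I) / real N))"
proof -
  interpret prob_space M by (rule M)
  define h where "h = length ps"
  define m where "m = length qs"
  define \<phi> where "\<phi> = real T / (real N - real T) * \<epsilon>"
  define A where "A j p = {w \<in> space M. j \<in> That p w}" for j p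
  define E where "E j = XX (space M) (A j) (set ps) (set qs)" for j
  define g where "g j = (\<Prod>p\<in>set ps. prob (A j p)) * (\<Prod>q\<in>set qs. 1 - prob (A j q))" for j
  define D where "D j = {w \<in> space M. idx w = j}" for j
  define S where "S = {w \<in> space M. (\<forall>p\<in>set ps. idx w \<in> That p w) \<and> (\<forall>q\<in>set qs. idx w \<notin> That q w)}"
  define G0 where "G0 = {w \<in> space M. idx w \<in> {1..N}}"
  have Npos: "real N > 0" using NT by simp
  have dj: "set ps \<inter> set qs = {}" using dist by simp
  have hc: "card (set ps) = h" using dist by (simp add: h_def distinct_card)
  have mc: "card (set qs) = m" using dist by (simp add: m_def distinct_card)
  have Dm: "D j \<in> events" for j
  proof -
    have "D j = idx -` {j} \<inter> space M" by (auto simp: D_def)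
    then show ?thesis using measurable_sets[OF idx_meas, of "{j}"] by simp
  qed
  have probE: "prob (E j) = g j" if j: "j \<in> {1..N}" for j
    unfolding E_def g_def
    by (rule XX_prob[OF indep_sensors[OF j, folded A_def]]) (use ps_L qs_L dj in auto)
  have key: "prob (D j \<inter> E j) = g j / real N" if j: "j \<in> {1..N}" for j
  proof -
    have "E j \<in> sigma_sets (space M) {{w \<in> space M. k \<in> That p w} | p k. p \<in> L \<and> k \<in> {1..N}}"
      unfolding E_def by (rule XX_sig) (use ps_L qs_L j in \<open>auto simp: A_def\<close>)
    from idx_indep[OF j this] idx_uniform[OF j] probE[OF j] show ?thesis
      by (simp add: D_def)
  qed
  have SG: "S \<inter> G0 = (\<Union>j\<in>{1..N}. D j \<inter> E j)"
    by (auto simp: S_def G0_def D_def E_def XX_def A_def)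
  have EM: "E j \<in> events" if "j \<in> {1..N}" for j
    unfolding E_def XX_def A_def using that ps_L qs_L est_meas
    by (intro sets.sets_Collect_conj sets.sets_Collect_finite_All sets.sets_Collect_neg) auto
  have probSG: "prob (S \<inter> G0) = (\<Sum>j\<in>{1..N}. g j / real N)"
    unfolding SG using key Dm EM
    by (subst measure_finite_Union) (auto simp: disjoint_family_on_def D_def)
  have G0eq: "G0 = (\<Union>j\<in>{1..N}. D j)" by (auto simp: G0_def D_def)
  have probG0: "prob G0 = 1"
    unfolding G0eq using Dm idx_uniform Npos
    by (subst measure_finite_Union) (auto simp: disjoint_family_on_def D_def)
  have G0m: "G0 \<in> events" unfolding G0eq using Dm by auto
  have SGm: "S \<inter> G0 \<in> events" unfolding SG using Dm EM by auto
  have compl0: "prob (space M - G0) = 0" using finite_measure_compl[OF G0m] probG0 prob_space by linarith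
  have SD: "S - G0 = (if ps = [] then space M - G0 else {})"
  proof (cases "ps = []")
    case True
    have "space M - G0 \<subseteq> S"
    proof
      fix w assume w: "w \<in> space M - G0"
      then have "idx w \<notin> {1..N}" by (simp add: G0_def)
      moreover have "\<And>q. q \<in> set qs \<Longrightarrow> That q w \<subseteq> {1..N}" using est_sub qs_L w by blast
      ultimately have "\<forall>q\<in>set qs. idx w \<notin> That q w" by blast
      then show "w \<in> S" using w True unfolding S_def by simp
    qed
    moreover have "S \<subseteq> space M" by (simp add: S_def)
    ultimately have "S - G0 = space M - G0" by blast
    then show ?thesis using True by simp
  next
    case False
    then obtain p where p: "p \<in> set ps" by (cases ps) auto
    have "S \<subseteq> G0"
    proof
      fix w assume w: "w \<in> S"
      then have "idx w \<in> That p w" "w \<in> space M" using p by (auto simp: S_def)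
      moreover have "That p w \<subseteq> {1..N}" using est_sub ps_L p \<open>w \<in> space M\<close> by blast
      ultimately show "w \<in> G0" by (auto simp: G0_def)
    qed
    then show ?thesis using False by simp
  qed
  have SDm: "S - G0 \<in> events" using SD G0m by auto
  have SU: "S = (S \<inter> G0) \<union> (S - G0)" by blast
  have "prob ((S \<inter> G0) \<union> (S - G0)) = prob (S \<inter> G0) + prob (S - G0)"
    by (rule finite_measure_Union[OF SGm SDm]) blast
  then have "prob S = prob (S \<inter> G0) + prob (S - G0)" using SU by simp
  also have "prob (S - G0) = 0" using SD compl0 by auto
  finally have probS: "prob S = (\<Sum>j\<in>{1..N}. g j) / real N"
    using probSG by (simp add: sum_divide_distrib)
  define U1 where "U1 = (\<Union>p\<in>set ps. Iset p)"
  define U2 where "U2 = (\<Union>q\<in>set qs. Iset q)"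
  define R where "R = {1..N} - (Jset \<union> U1 \<union> U2)"
  have psL: "p \<in> L" if "p \<in> set ps" for p using ps_L that by blast
  have qsL: "p \<in> L" if "p \<in> set qs" for p using qs_L that by blast
  have finI: "finite (Iset p)" if "p \<in> L" for p using I_sub[OF that] finite_subset by blast
  have finJ: "finite Jset" using J_sub finite_subset by blast
  have U1s: "U1 \<subseteq> {1..N}" using I_sub psL by (auto simp: U1_def)
  have U2s: "U2 \<subseteq> {1..N}" using I_sub qsL by (auto simp: U2_def)
  have d1: "Jset \<inter> U1 = {}" using IJ_disj psL by (auto simp: U1_def)
  have d2: "Jset \<inter> U2 = {}" using IJ_disj qsL by (auto simp: U2_def)
  have d3: "U1 \<inter> U2 = {}"
  proof -
    { fix j p q assume "p \<in> set ps" "q \<in> set qs" "j \<in> Iset p" "j \<in> Iset q"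
      moreover have "p \<noteq> q" using dj \<open>p \<in> set ps\<close> \<open>q \<in> set qs\<close> by blast
      ultimately have False using II_disj psL qsL by blast }
    then show ?thesis by (auto simp: U1_def U2_def)
  qed
  have cardU1: "card U1 = h * I"
  proof -
    have dd: "\<forall>i\<in>set ps. \<forall>j\<in>set ps. i \<noteq> j \<longrightarrow> Iset i \<inter> Iset j = {}" using II_disj psL by blast
    have "card U1 = (\<Sum>p\<in>set ps. card (Iset p))"
      unfolding U1_def by (rule card_UN_disjoint) (use dd finI psL in auto)
    also have "\<dots> = (\<Sum>p\<in>set ps. I)" using I_card psL by simp
    finally show ?thesis using hc by simp
  qed
  have cardU2: "card U2 = m * I"
  proof -
    have dd: "\<forall>i\<in>set qs. \<forall>j\<in>set qs. i \<noteq> j \<longrightarrow> Iset i \<inter> Iset j = {}" using II_disj qsL by blast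
    have "card U2 = (\<Sum>p\<in>set qs. card (Iset p))"
      unfolding U2_def by (rule card_UN_disjoint) (use dd finI qsL in auto)
    also have "\<dots> = (\<Sum>p\<in>set qs. I)" using I_card qsL by simp
    finally show ?thesis using mc by simp
  qed
  have finU1: "finite U1" "finite U2" using U1s U2s finite_subset by blast+
  have cardJU: "card (Jset \<union> U1 \<union> U2) = J + h * I + m * I"
    using d1 d2 d3 finJ finU1 cardU1 cardU2 J_card
    by (simp add: card_Un_disjoint Int_Un_distrib2)
  have cardR: "real (card R) = real N - real J - (real m + real h) * real I"
  proof -
    have "card R = N - card (Jset \<union> U1 \<union> U2)" unfolding R_def
      using J_sub U1s U2s finJ finU1 by (subst card_Diff_subset) auto
    moreover have "card (Jset \<union> U1 \<union> U2) \<le> N"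
      using card_mono[of "{1..N}" "Jset \<union> U1 \<union> U2"] J_sub U1s U2s by auto
    ultimately show ?thesis using cardJU by (simp add: of_nat_diff algebra_simps)
  qed
  have all: "{1..N} = Jset \<union> U1 \<union> U2 \<union> R" using J_sub U1s U2s by (auto simp: R_def)
  have prodc: "(\<Prod>p\<in>X. c) = c ^ card X" for X and c :: real by simp
  have gJ: "g j = (1 - \<epsilon>) ^ h * \<epsilon> ^ m" if "j \<in> Jset" for j
  proof -
    have "(\<Prod>p\<in>set ps. prob (A j p)) = (\<Prod>p\<in>set ps. 1 - \<epsilon>)"
      by (rule prod.cong[OF refl]) (use detect psL that in \<open>auto simp: A_def\<close>)
    moreover have "(\<Prod>p\<in>set qs. 1 - prob (A j p)) = (\<Prod>p\<in>set qs. \<epsilon>)"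
      by (rule prod.cong[OF refl]) (use detect qsL that in \<open>auto simp: A_def\<close>)
    ultimately show ?thesis by (simp add: g_def hc mc)
  qed
  have fa: "prob (A j p) = \<phi>" if "p \<in> L" "j \<in> {1..N}" "j \<notin> Jset" "j \<notin> Iset p" for j p
    using false_alarm[OF that(1), of j] that by (simp add: A_def \<phi>_def)
  have gR: "g j = \<phi> ^ h * (1 - \<phi>) ^ m" if "j \<in> R" for j
  proof -
    have "(\<Prod>p\<in>set ps. prob (A j p)) = (\<Prod>p\<in>set ps. \<phi>)"
      by (rule prod.cong[OF refl]) (use fa psL that in \<open>auto simp: R_def U1_def U2_def\<close>)
    moreover have "(\<Prod>p\<in>set qs. 1 - prob (A j p)) = (\<Prod>p\<in>set qs. 1 - \<phi>)"
      by (rule prod.cong[OF refl]) (use fa qsL that in \<open>auto simp: R_def U1_def U2_def\<close>)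
    ultimately show ?thesis by (simp add: g_def hc mc)
  qed
  have gU1: "g j = (1 - \<epsilon>) * \<phi> ^ (h - 1) * (1 - \<phi>) ^ m" if p0: "p0 \<in> set ps" and j: "j \<in> Iset p0" for j p0
  proof -
    have jN: "j \<in> {1..N}" "j \<notin> Jset" using I_sub IJ_disj psL p0 j by blast+
    have nI: "j \<notin> Iset p" if "p \<in> L" "p \<noteq> p0" for p using II_disj[of p p0] that psL[OF p0] j by blast
    have "(\<Prod>p\<in>set ps. prob (A j p)) = prob (A j p0) * (\<Prod>p\<in>set ps - {p0}. prob (A j p))"
      using p0 by (simp add: prod.remove)
    also have "(\<Prod>p\<in>set ps - {p0}. prob (A j p)) = (\<Prod>p\<in>set ps - {p0}. \<phi>)"
      by (rule prod.cong[OF refl]) (use fa psL jN nI in \<open>auto\<close>)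
    also have "prob (A j p0) = 1 - \<epsilon>" using detect psL p0 j by (simp add: A_def)
    finally have 1: "(\<Prod>p\<in>set ps. prob (A j p)) = (1 - \<epsilon>) * \<phi> ^ (h - 1)"
      using p0 hc by simp
    have "(\<Prod>p\<in>set qs. 1 - prob (A j p)) = (\<Prod>p\<in>set qs. 1 - \<phi>)"
      proof (rule prod.cong[OF refl])
      fix x assume x: "x \<in> set qs"
      then have "x \<noteq> p0" using dj p0 by blast
      then show "1 - prob (A j x) = 1 - \<phi>" using fa[of x j] qsL[OF x] jN nI[of x] qsL[OF x] by simp
    qed
    then show ?thesis using 1 by (simp add: g_def mc)
  qed
  have gU2: "g j = \<epsilon> * \<phi> ^ h * (1 - \<phi>) ^ (m - 1)" if p0: "p0 \<in> set qs" and j: "j \<in> Iset p0" for j p0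
  proof -
    have jN: "j \<in> {1..N}" "j \<notin> Jset" using I_sub IJ_disj qsL p0 j by blast+
    have nI: "j \<notin> Iset p" if "p \<in> L" "p \<noteq> p0" for p using II_disj[of p p0] that qsL[OF p0] j by blast
    have "(\<Prod>p\<in>set qs. 1 - prob (A j p)) = (1 - prob (A j p0)) * (\<Prod>p\<in>set qs - {p0}. 1 - prob (A j p))"
      using p0 by (simp add: prod.remove)
    also have "(\<Prod>p\<in>set qs - {p0}. 1 - prob (A j p)) = (\<Prod>p\<in>set qs - {p0}. 1 - \<phi>)"
      by (rule prod.cong[OF refl]) (use fa qsL jN nI in \<open>auto\<close>)
    also have "prob (A j p0) = 1 - \<epsilon>" using detect qsL p0 j by (simp add: A_def)
    finally have 1: "(\<Prod>p\<in>set qs. 1 - prob (A j p)) = \<epsilon> * (1 - \<phi>) ^ (m - 1)"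
      using p0 mc by simp
    have "(\<Prod>p\<in>set ps. prob (A j p)) = (\<Prod>p\<in>set ps. \<phi>)"
      proof (rule prod.cong[OF refl])
      fix x assume x: "x \<in> set ps"
      then have "x \<noteq> p0" using dj p0 by blast
      then show "prob (A j x) = \<phi>" using fa[of x j] psL[OF x] jN nI[of x] psL[OF x] by simp
    qed
    then show ?thesis using 1 by (simp add: g_def hc)
  qed
  have sJ: "(\<Sum>j\<in>Jset. g j) = real J * ((1 - \<epsilon>) ^ h * \<epsilon> ^ m)"
    using gJ J_card by simp
  have sR: "(\<Sum>j\<in>R. g j) = real (card R) * (\<phi> ^ h * (1 - \<phi>) ^ m)"
    using gR by simp
  have sU1: "(\<Sum>j\<in>U1. g j) = real (h * I) * ((1 - \<epsilon>) * \<phi> ^ (h - 1) * (1 - \<phi>) ^ m)"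
  proof -
    have "(\<Sum>j\<in>U1. g j) = (\<Sum>j\<in>U1. (1 - \<epsilon>) * \<phi> ^ (h - 1) * (1 - \<phi>) ^ m)"
      by (rule sum.cong[OF refl]) (use gU1 in \<open>auto simp: U1_def\<close>)
    then show ?thesis using cardU1 by simp
  qed
  have sU2: "(\<Sum>j\<in>U2. g j) = real (m * I) * (\<epsilon> * \<phi> ^ h * (1 - \<phi>) ^ (m - 1))"
  proof -
    have "(\<Sum>j\<in>U2. g j) = (\<Sum>j\<in>U2. \<epsilon> * \<phi> ^ h * (1 - \<phi>) ^ (m - 1))"
      by (rule sum.cong[OF refl]) (use gU2 in \<open>auto simp: U2_def\<close>)
    then show ?thesis using cardU2 by simp
  qed
  have finR: "finite R" by (simp add: R_def)
  have "(\<Sum>j\<in>{1..N}. g j) = (\<Sum>j\<in>Jset. g j) + (\<Sum>j\<in>U1. g j) + (\<Sum>j\<in>U2. g j) + (\<Sum>j\<in>R. g j)"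
  proof -
    have e1: "(Jset \<union> U1 \<union> U2) \<inter> R = {}" by (auto simp: R_def)
    have e2: "(Jset \<union> U1) \<inter> U2 = {}" using d2 d3 by blast
    have "(\<Sum>j\<in>{1..N}. g j) = sum g (Jset \<union> U1 \<union> U2 \<union> R)" by (rule arg_cong[OF all])
    also have "\<dots> = sum g (Jset \<union> U1 \<union> U2) + sum g R"
      by (rule sum.union_disjoint) (use finJ finU1 finR e1 in auto)
    also have "sum g (Jset \<union> U1 \<union> U2) = sum g (Jset \<union> U1) + sum g U2"
      by (rule sum.union_disjoint) (use finJ finU1 e2 in auto)
    also have "sum g (Jset \<union> U1) = sum g Jset + sum g U1"
      by (rule sum.union_disjoint) (use finJ finU1 d1 in auto)
    finally show ?thesis .
  qed
  then have tot: "(\<Sum>j\<in>{1..N}. g j) = real J * ((1 - \<epsilon>) ^ h * \<epsilon> ^ m)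
     + real h * real I * ((1 - \<epsilon>) * \<phi> ^ (h - 1) * (1 - \<phi>) ^ m)
     + real m * real I * (\<epsilon> * \<phi> ^ h * (1 - \<phi>) ^ (m - 1))
     + (real N - real J - (real m + real h) * real I) * (\<phi> ^ h * (1 - \<phi>) ^ m)"
    using sJ sU1 sU2 sR cardR by simp
  have "measure M {w \<in> space M. (\<forall>p\<in>set ps. idx w \<in> That p w) \<and> (\<forall>q\<in>set qs. idx w \<notin> That q w)} = prob S"
    by (simp add: S_def)
  also have "\<dots> = (\<Sum>j\<in>{1..N}. g j) / real N" by (rule probS)
  finally have X: "measure M {w \<in> space M. (\<forall>p\<in>set ps. idx w \<in> That p w) \<and> (\<forall>q\<in>set qs. idx w \<notin> That q w)} = (\<Sum>j\<in>{1..N}. g j) / real N" .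
  have NZ: "real N \<noteq> 0" using Npos by simp
  show ?thesis unfolding X tot Let_def h_def[symmetric] m_def[symmetric] \<phi>_def[symmetric]
    using NZ by (simp add: add_divide_distrib diff_divide_distrib algebra_simps)
qed

end
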